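(* Let $-\infty\le a<b\le\infty$, let $\kappa,\varphi:(a,b)\to\mathbb C$ be measurable with $\kappa\in L^2(a,b)$ and $\mathbb 1_{(a,c)}\varphi\in L^2(a,b)$ for every $c\in(a,b)$. Choose $c_0:=a<c_1<c_2<\dots<b$ with $\|\mathbb 1_{(c_n,b)}\kappa\|^2=2^{-n}\|\kappa\|^2$, and set $J_n=(c_{n-1},c_n)$, $\omega_n=\|\mathbb 1_{J_n}\kappa\|\cdot\|\mathbb 1_{J_n}\varphi\|$. Let $\mathsf g$ be a growth function with order $\rho_{\mathsf g}>1$. Then \[ \sum_{n=1}^\infty\frac1{\mathsf g(\omega_n^{-1})}<\infty\iff \int_a^b\Big[\mathsf g\Big(\big(\|\mathbb 1_{(a,t)}\varphi\|\,\|\mathbb 1_{(t,b)}\kappa\|\big)^{-1}\Big)\Big]^{-1}\cdot\frac{|\kappa(t)|^2\,dt}{\|\mathbb 1_{(t,b)}\kappa\|^2}<\infty . \]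
   Context: Norms are $L^2(a,b)$-norms. A growth function is $\mathsf g:[0,\infty)\to(0,\infty)$, continuously differentiable with $\mathsf g'>0$, such that $\rho_{\mathsf g}:=\lim_{r\to\infty}\frac{\log\mathsf g(r)}{\log r}$ exists in $(0,\infty)$ and $\lim_{r\to\infty}\frac{r\mathsf g'(r)}{\mathsf g(r)}=\rho_{\mathsf g}$. Terms with $\omega_n=0$ (resp. a vanishing product inside $\mathsf g$) are interpreted as $0$. *)

theory Defs
  imports "HOL-Analysis.Analysis"
begin

definition eint :: "ereal \<Rightarrow> ereal \<Rightarrow> real set" where
  "eint a b = {t. a < ereal t \<and> ereal t < b}"

text \<open>The L2 norm of the function 1_S f, i.e. sqrt of the Lebesgue integral of |f|^2 over S.
  (Only used where this integral is finite.)\<close>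
definition L2nrm :: "real set \<Rightarrow> (real \<Rightarrow> complex) \<Rightarrow> real" where
  "L2nrm S f = sqrt (enn2real (\<integral>\<^sup>+ t\<in>S. ennreal ((cmod (f t))\<^sup>2) \<partial>lborel))"

definition growth_function :: "(real \<Rightarrow> real) \<Rightarrow> real \<Rightarrow> bool" where
  "growth_function g \<rho> \<longleftrightarrow>
     (\<forall>r\<ge>0. g r > 0) \<and> 0 < \<rho> \<and>
     (\<exists>g'. (\<forall>r\<ge>0. (g has_real_derivative g' r) (at r within {0..}) \<and> g' r > 0) \<and>
           continuous_on {0..} g' \<and>
           ((\<lambda>r. r * g' r / g r) \<longlongrightarrow> \<rho>) at_top) \<and>
     ((\<lambda>r. ln (g r) / ln r) \<longlongrightarrow> \<rho>) at_top"

definition gterm :: "(real \<Rightarrow> real) \<Rightarrow> real \<Rightarrow> real" where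
  "gterm g x = (if x = 0 then 0 else 1 / g (1 / x))"

end

theory Submission
  imports Defs
begin

lemma gf_pos:
  assumes "growth_function g \<rho>" "r \<ge> 0"
  shows "g r > 0"
  using assms unfolding growth_function_def by simp

lemma gf_deriv_ex:
  assumes "growth_function g \<rho>"
  shows "\<exists>g'. (\<forall>r>0. (g has_real_derivative g' r) (at r) \<and> g' r > 0) \<and>
    ((\<lambda>r. r * g' r / g r) \<longlongrightarrow> \<rho>) at_top"
proof -
  from assms obtain g' where d: "\<forall>r\<ge>0. (g has_real_derivative g' r) (at r within {0..}) \<and> g' r > 0"
    and l: "((\<lambda>r. r * g' r / g r) \<longlongrightarrow> \<rho>) at_top"
    unfolding growth_function_def by blast
  have "(g has_real_derivative g' r) (at r) \<and> g' r > 0" if "r > 0" for r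
  proof -
    have "r \<in> interior {0..}" using that by simp
    then have "at r within {0..} = at r" by (rule at_within_interior)
    moreover have "(g has_real_derivative g' r) (at r within {0..}) \<and> g' r > 0" using d that by simp
    ultimately show ?thesis by simp
  qed
  then show ?thesis using l by blast
qed

lemma gf_mono:
  assumes "growth_function g \<rho>" "0 < x" "x \<le> y"
  shows "g x \<le> g y"
proof -
  obtain g' where d: "\<forall>r>0. (g has_real_derivative g' r) (at r) \<and> g' r > 0"
    using gf_deriv_ex[OF assms(1)] by blast
  show ?thesis
  proof (rule DERIV_nonneg_imp_nondecreasing[OF assms(3)])
    fix t assume "x \<le> t" "t \<le> y"
    then have t: "t > 0" using assms by simp
    then have "(g has_real_derivative g' t) (at t)" "0 \<le> g' t" using d by auto
    then show "\<exists>y. (g has_real_derivative y) (at t) \<and> 0 \<le> y" by blast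
  qed
qed

lemma gterm_nonneg:
  assumes "growth_function g \<rho>" "0 \<le> x"
  shows "gterm g x \<ge> 0"
proof (cases "x = 0")
  case False
  then have "1/x \<ge> 0" using assms(2) by simp
  then have "g (1/x) > 0" using gf_pos[OF assms(1)] by blast
  then show ?thesis unfolding gterm_def by simp
qed (simp add: gterm_def)

lemma gterm_pos:
  assumes "growth_function g \<rho>" "0 < x"
  shows "gterm g x > 0"
proof -
  have "g (1/x) > 0" using gf_pos[OF assms(1)] assms(2) by simp
  then show ?thesis using assms(2) unfolding gterm_def by simp
qed

lemma gterm_mono:
  assumes "growth_function g \<rho>" "0 \<le> x" "x \<le> y"
  shows "gterm g x \<le> gterm g y"
proof (cases "x = 0")
  case True
  then show ?thesis using gterm_nonneg[OF assms(1), of y] assms by (simp add: gterm_def)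
next
  case False
  then have x: "x > 0" using assms by simp
  then have y: "y > 0" using assms by simp
  have yx: "1/y \<le> 1/x" using x assms(3) by (simp add: frac_le)
  have "g (1/y) \<le> g (1/x)" by (rule gf_mono[OF assms(1) _ yx]) (use y in simp)
  moreover have "g (1/y) > 0" using gf_pos[OF assms(1)] y by simp
  ultimately have "1 / g (1/x) \<le> 1 / g (1/y)" by (intro divide_left_mono) auto
  then show ?thesis using x y unfolding gterm_def by simp
qed

lemma gf_potter_raw:
  assumes g: "growth_function g \<rho>" and \<rho>: "\<rho> > 1"
  shows "\<exists>R0>0. \<exists>p::nat. (\<forall>r s. R0 \<le> r \<longrightarrow> r \<le> s \<longrightarrow> g r * s \<le> g s * r) \<and>
            (\<forall>r s. R0 \<le> r \<longrightarrow> r \<le> s \<longrightarrow> g s * r ^ p \<le> g r * s ^ p)"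
proof -
  obtain g' where d0: "\<forall>r>0. (g has_real_derivative g' r) (at r) \<and> g' r > 0"
    and l: "((\<lambda>r. r * g' r / g r) \<longlongrightarrow> \<rho>) at_top"
    using gf_deriv_ex[OF g] by blast
  have d: "(g has_real_derivative g' r) (at r) \<and> g' r > 0" if "r > 0" for r using d0 that by blast
  have gp: "g r > 0" if "r \<ge> 0" for r using gf_pos[OF g that] .
  define p :: nat where "p = nat \<lceil>\<rho>\<rceil> + 1"
  have pr: "real p > \<rho>" unfolding p_def by linarith
  have "eventually (\<lambda>r. r * g' r / g r > 1) at_top" using l \<rho> by (rule order_tendstoD)
  moreover have "eventually (\<lambda>r. r * g' r / g r < real p) at_top" using l pr by (rule order_tendstoD)
  ultimately have "eventually (\<lambda>r. r * g' r / g r > 1 \<and> r * g' r / g r < real p) at_top"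
    by (rule eventually_conj)
  then obtain R where R: "\<And>r. r \<ge> R \<Longrightarrow> r * g' r / g r > 1 \<and> r * g' r / g r < real p"
    unfolding eventually_at_top_linorder by blast
  define R0 where "R0 = max R 1"
  have R0: "R0 > 0" "\<And>r. r \<ge> R0 \<Longrightarrow> r > 0 \<and> r * g' r > g r \<and> r * g' r < real p * g r"
  proof -
    show "R0 > 0" unfolding R0_def by simp
    fix r assume "r \<ge> R0"
    then have r: "r \<ge> R" "r > 0" unfolding R0_def by auto
    have gr: "g r > 0" using gp r by simp
    show "r > 0 \<and> r * g' r > g r \<and> r * g' r < real p * g r"
      using R[OF r(1)] gr r by (simp add: field_simps)
  qed
  have A: "g r * s \<le> g s * r" if "R0 \<le> r" "r \<le> s" for r s
  proof -
    have "g r / r \<le> g s / s"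
    proof (rule DERIV_nonneg_imp_nondecreasing[OF that(2)])
      fix x assume x: "r \<le> x" "x \<le> s"
      then have x0: "x > 0" "x * g' x > g x" using R0(2)[of x] that by auto
      have "((\<lambda>x. g x / x) has_real_derivative (g' x * x - g x * 1) / (x * x)) (at x)"
        by (rule DERIV_divide) (use d[OF x0(1)] x0 in \<open>auto intro: derivative_eq_intros\<close>)
      moreover have "(g' x * x - g x * 1) / (x * x) \<ge> 0" using x0 by (simp add: algebra_simps)
      ultimately show "\<exists>y. ((\<lambda>x. g x / x) has_real_derivative y) (at x) \<and> y \<ge> 0" by blast
    qed
    moreover have "r > 0" "s > 0" using R0(2)[of r] that by auto
    ultimately show ?thesis by (simp add: field_simps)
  qed
  have B: "g s * r ^ p \<le> g r * s ^ p" if "R0 \<le> r" "r \<le> s" for r s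
  proof -
    have "g s / s ^ p \<le> g r / r ^ p"
    proof (rule DERIV_nonpos_imp_nonincreasing[OF that(2)])
      fix x assume x: "r \<le> x" "x \<le> s"
      then have x0: "x > 0" "x * g' x < real p * g x" using R0(2)[of x] that by auto
      have "((\<lambda>x. g x / x ^ p) has_real_derivative
           (g' x * x ^ p - g x * (real p * x ^ (p - 1))) / (x ^ p * x ^ p)) (at x)"
        by (rule DERIV_divide) (use d[OF x0(1)] x0 in \<open>auto intro!: derivative_eq_intros\<close>)
      moreover have "g' x * x ^ p - g x * (real p * x ^ (p - 1)) \<le> 0"
      proof -
        have "p \<ge> 1" unfolding p_def by simp
        then have xp: "x ^ p = x * x ^ (p - 1)" by (metis power_eq_if not_one_le_zero)
        have "g' x * x ^ p = (x * g' x) * x ^ (p - 1)" using xp by simp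
        also have "\<dots> \<le> (real p * g x) * x ^ (p - 1)"
          using x0 by (intro mult_right_mono) auto
        finally show ?thesis by (simp add: ac_simps)
      qed
      then have "(g' x * x ^ p - g x * (real p * x ^ (p - 1))) / (x ^ p * x ^ p) \<le> 0"
        using x0 by (simp add: divide_nonpos_pos)
      ultimately show "\<exists>y. ((\<lambda>x. g x / x ^ p) has_real_derivative y) (at x) \<and> y \<le> 0" by blast
    qed
    moreover have "r > 0" "s > 0" using R0(2)[of r] that by auto
    ultimately show ?thesis by (simp add: field_simps)
  qed
  show ?thesis using A B R0(1) by blast
qed

lemma gf_potter:
  assumes g: "growth_function g \<rho>" and \<rho>: "\<rho> > 1"
  shows "\<exists>x0>0. \<exists>p::nat.
     (\<forall>x l. 0 < x \<longrightarrow> x \<le> x0 \<longrightarrow> 0 < l \<longrightarrow> l \<le> 1 \<longrightarrow> gterm g (l * x) \<le> l * gterm g x) \<and>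
     (\<forall>x l. 0 < x \<longrightarrow> 1 \<le> l \<longrightarrow> l * x \<le> x0 \<longrightarrow> gterm g (l * x) \<le> l ^ p * gterm g x)"
proof -
  obtain R0 and p :: nat where R0: "R0 > 0"
    and A: "\<And>r s. R0 \<le> r \<Longrightarrow> r \<le> s \<Longrightarrow> g r * s \<le> g s * r"
    and B: "\<And>r s. R0 \<le> r \<Longrightarrow> r \<le> s \<Longrightarrow> g s * r ^ p \<le> g r * s ^ p"
    using gf_potter_raw[OF g \<rho>] by blast
  have gp: "g r > 0" if "r \<ge> 0" for r using gf_pos[OF g that] .
  have P1: "gterm g (l * x) \<le> l * gterm g x" if "0 < x" "x \<le> 1/R0" "0 < l" "l \<le> 1" for x l
  proof -
    have r: "R0 \<le> 1/x" using that R0 by (simp add: field_simps)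
    have rs: "1/x \<le> 1/(l*x)" using that by (simp add: field_simps)
    have "g (1/x) * (1/(l*x)) \<le> g (1/(l*x)) * (1/x)" by (rule A[OF r rs])
    then have "g (1/x) \<le> l * g (1/(l*x))" using that by (simp add: field_simps)
    moreover have "g (1/x) > 0" "g (1/(l*x)) > 0" using gp that by auto
    ultimately show ?thesis using that unfolding gterm_def by (simp add: field_simps)
  qed
  have P2: "gterm g (l * x) \<le> l ^ p * gterm g x" if "0 < x" "1 \<le> l" "l * x \<le> 1/R0" for x l
  proof -
    have lx: "l * x > 0" using that by simp
    have r: "R0 \<le> 1/(l*x)" using that R0 lx by (simp add: field_simps)
    have rs: "1/(l*x) \<le> 1/x" using that lx by (simp add: field_simps)
    have "g (1/x) * (1/(l*x)) ^ p \<le> g (1/(l*x)) * (1/x) ^ p" by (rule B[OF r rs])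
    then have "g (1/x) \<le> g (1/(l*x)) * l ^ p" using that lx
      by (simp add: field_simps power_divide power_mult_distrib)
    moreover have "g (1/x) > 0" "g (1/(l*x)) > 0" using gp that lx by auto
    ultimately show ?thesis using that lx unfolding gterm_def by (simp add: field_simps)
  qed
  show ?thesis using R0 P1 P2 by (intro exI[of _ "1/R0"] conjI exI[of _ p]) auto
qed

lemma gterm_small:
  assumes g: "growth_function g \<rho>" and x: "\<And>n. x n \<ge> 0"
    and s: "summable (\<lambda>n. gterm g (x n))" and e: "e > 0"
  shows "eventually (\<lambda>n. x n < e) sequentially"
proof -
  have "(\<lambda>n. gterm g (x n)) \<longlonglongrightarrow> 0" using s by (rule summable_LIMSEQ_zero)
  moreover have "gterm g e > 0" using gterm_pos[OF g e] .
  ultimately have "eventually (\<lambda>n. gterm g (x n) < gterm g e) sequentially"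
    by (rule order_tendstoD)
  then show ?thesis
  proof (rule eventually_mono)
    fix n assume "gterm g (x n) < gterm g e"
    then show "x n < e" using gterm_mono[OF g, of e "x n"] e by force
  qed
qed

lemma half_summable:
  assumes g: "growth_function g \<rho>" and \<rho>: "\<rho> > 1" and x: "\<And>n. x n \<ge> 0"
    and s: "summable (\<lambda>n. gterm g (x n / 2))"
  shows "summable (\<lambda>n. gterm g (x n))"
proof -
  obtain x0 and p :: nat where x0: "x0 > 0"
    and P2: "\<And>x l. 0 < x \<Longrightarrow> 1 \<le> l \<Longrightarrow> l * x \<le> x0 \<Longrightarrow> gterm g (l * x) \<le> l ^ p * gterm g x"
    using gf_potter[OF g \<rho>] by blast
  have "eventually (\<lambda>n. x n / 2 < x0 / 2) sequentially"
    by (rule gterm_small[OF g _ s]) (use x x0 in auto)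
  then have ev: "eventually (\<lambda>n. norm (gterm g (x n)) \<le> 2 ^ p * gterm g (x n / 2)) sequentially"
  proof (rule eventually_mono)
    fix n assume a: "x n / 2 < x0 / 2"
    show "norm (gterm g (x n)) \<le> 2 ^ p * gterm g (x n / 2)"
    proof (cases "x n = 0")
      case True then show ?thesis by (simp add: gterm_def)
    next
      case False
      then have "x n / 2 > 0" using x[of n] by simp
      from P2[OF this, of 2] a have "gterm g (2 * (x n / 2)) \<le> 2 ^ p * gterm g (x n / 2)" by simp
      then show ?thesis using gterm_nonneg[OF g x[of n]] by simp
    qed
  qed
  show ?thesis by (rule summable_comparison_test_ev[OF ev summable_mult[OF s]])
qed

lemma uniform_D:
  assumes g: "growth_function g \<rho>" and \<rho>: "\<rho> > 1" and X: "X > 0"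
  shows "\<exists>D. \<forall>x l. 0 \<le> x \<longrightarrow> x \<le> X \<longrightarrow> 0 < l \<longrightarrow> l \<le> 1 \<longrightarrow>
            gterm g (3 * l * x) \<le> D * l * gterm g x"
proof -
  obtain x0 and p :: nat where x0: "x0 > 0"
    and P1: "\<And>x l. 0 < x \<Longrightarrow> x \<le> x0 \<Longrightarrow> 0 < l \<Longrightarrow> l \<le> 1 \<Longrightarrow> gterm g (l * x) \<le> l * gterm g x"
    and P2: "\<And>x l. 0 < x \<Longrightarrow> 1 \<le> l \<Longrightarrow> l * x \<le> x0 \<Longrightarrow> gterm g (l * x) \<le> l ^ p * gterm g x"
    using gf_potter[OF g \<rho>] by blast
  define m where "m = gterm g (x0 / 3)"
  have m: "m > 0" unfolding m_def using gterm_pos[OF g] x0 by simp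
  define D1 where "D1 = 3 * X * gterm g x0 / (x0 * m)"
  define D2 where "D2 = 3 * X * gterm g (3 * X) / (x0 * m)"
  have D1: "D1 \<ge> 0" unfolding D1_def using X x0 m gterm_nonneg[OF g, of x0] by simp
  have D2: "D2 \<ge> 0" unfolding D2_def using X x0 m gterm_nonneg[OF g, of "3*X"] by simp
  define D where "D = 3 ^ p + D1 + D2"
  have "gterm g (3 * l * x) \<le> D * l * gterm g x"
    if x: "0 \<le> x" "x \<le> X" and l: "0 < l" "l \<le> 1" for x l
  proof (cases "x = 0")
    case True then show ?thesis by (simp add: gterm_def)
  next
    case False
    then have xp: "x > 0" using x by simp
    have gx: "gterm g x \<ge> 0" using gterm_nonneg[OF g x(1)] .
    show ?thesis
    proof (cases "x \<le> x0 / 3")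
      case True
      have "gterm g (3 * l * x) = gterm g (l * (3 * x))" by (simp add: ac_simps)
      also have "\<dots> \<le> l * gterm g (3 * x)" by (rule P1) (use xp True l in auto)
      also have "\<dots> \<le> l * (3 ^ p * gterm g x)"
        using P2[OF xp, of 3] True l by (intro mult_left_mono) auto
      also have "\<dots> \<le> D * l * gterm g x"
      proof -
        have "3 ^ p \<le> D" unfolding D_def using D1 D2 by simp
        then have "3 ^ p * (l * gterm g x) \<le> D * (l * gterm g x)"
          using l gx by (intro mult_right_mono) auto
        then show ?thesis by (simp add: ac_simps)
      qed
      finally show ?thesis .
    next
      case False
      then have gxm: "gterm g x \<ge> m" unfolding m_def using gterm_mono[OF g, of "x0/3" x] x0 by simp
      show ?thesis
      proof (cases "3 * l * x \<le> x0")
        case True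
        define l' where "l' = 3 * l * x / x0"
        have l': "0 < l'" "l' \<le> 1" unfolding l'_def using True xp l x0 by auto
        have "gterm g (3 * l * x) = gterm g (l' * x0)" unfolding l'_def using x0 by simp
        also have "\<dots> \<le> l' * gterm g x0" by (rule P1) (use x0 l' in auto)
        also have "\<dots> \<le> (3 * l * X / x0) * gterm g x0"
          unfolding l'_def using x l x0 gterm_nonneg[OF g, of x0]
          by (intro mult_right_mono divide_right_mono) auto
        also have "\<dots> = D1 * l * m" unfolding D1_def using m x0 by (simp add: field_simps)
        also have "\<dots> \<le> D1 * l * gterm g x" using D1 l gxm by (intro mult_left_mono) auto
        also have "\<dots> \<le> D * l * gterm g x"
          unfolding D_def using D2 l gx by (intro mult_right_mono) auto
        finally show ?thesis .
      next
        case False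
        have "3 * l * x \<le> 3 * l * X" using x l by (intro mult_left_mono) auto
        then have "x0 \<le> 3 * X * l" using False by (simp add: ac_simps)
        then have lb: "3 * X * l / x0 \<ge> 1" using x0 by simp
        have lxX: "3 * l * x \<le> 3 * X"
        proof -
          have "l * x \<le> 1 * x" using l x by (intro mult_right_mono) auto
          then show ?thesis using x by simp
        qed
        have "gterm g (3 * l * x) \<le> gterm g (3 * X)"
          using x l lxX by (intro gterm_mono[OF g]) auto
        also have "\<dots> \<le> (3 * X * l / x0) * gterm g (3 * X)"
          using mult_right_mono[OF lb gterm_nonneg[OF g, of "3 * X"]] X by simp
        also have "\<dots> = D2 * l * m" unfolding D2_def using m x0 by (simp add: field_simps)
        also have "\<dots> \<le> D2 * l * gterm g x" using D2 l gxm by (intro mult_left_mono) auto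
        also have "\<dots> \<le> D * l * gterm g x"
          unfolding D_def using D1 l gx by (intro mult_right_mono) auto
        finally show ?thesis .
      qed
    qed
  qed
  then show ?thesis by blast
qed

lemma geo_rev_bound:
  fixes r :: real assumes r: "0 \<le> r" "r < 1"
  shows "(\<Sum>j\<le>n. r ^ (n - j)) \<le> 1 / (1 - r)"
proof (induction n)
  case 0 then show ?case using r by (simp add: field_simps)
next
  case (Suc n)
  have "(\<Sum>j\<le>Suc n. r ^ (Suc n - j)) = (\<Sum>j\<le>n. r ^ (Suc n - j)) + 1" by simp
  also have "(\<Sum>j\<le>n. r ^ (Suc n - j)) = (\<Sum>j\<le>n. r * r ^ (n - j))"
    by (rule sum.cong) (auto simp: Suc_diff_le)
  also have "\<dots> = r * (\<Sum>j\<le>n. r ^ (n - j))" by (simp add: sum_distrib_left)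
  also have "r * (\<Sum>j\<le>n. r ^ (n - j)) + 1 \<le> r * (1 / (1 - r)) + 1"
    using Suc.IH r by (intro add_right_mono mult_left_mono) auto
  also have "\<dots> = 1 / (1 - r)" using r by (simp add: field_simps)
  finally show ?case by simp
qed

lemma conv_summable:
  assumes g: "growth_function g \<rho>" and \<rho>: "\<rho> > 1"
    and x: "\<And>n. x n \<ge> 0" and y: "\<And>n. y n \<ge> 0"
    and yb: "\<And>n. (y n)\<^sup>2 \<le> 2 * (\<Sum>j\<le>n. (1/2) ^ (n - j) * (x j)\<^sup>2)"
    and s: "summable (\<lambda>n. gterm g (x n))"
  shows "summable (\<lambda>n. gterm g (y n))"
proof -
  have "eventually (\<lambda>n. x n < 1) sequentially" by (rule gterm_small[OF g x s]) simp
  then obtain N where N: "\<And>n. n \<ge> N \<Longrightarrow> x n < 1" unfolding eventually_sequentially by blast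
  define X where "X = 1 + (\<Sum>k<N. x k)"
  have X0: "X > 0" unfolding X_def using x by (simp add: sum_nonneg add_pos_nonneg)
  have xX: "x n \<le> X" for n
  proof (cases "n < N")
    case True
    then have "x n \<le> (\<Sum>k<N. x k)" using x by (intro member_le_sum) auto
    then show ?thesis unfolding X_def by simp
  next
    case False
    then have "x n < 1" using N by simp
    then show ?thesis unfolding X_def using x by (smt (verit) sum_nonneg)
  qed
  obtain D where D: "\<And>x l. 0 \<le> x \<Longrightarrow> x \<le> X \<Longrightarrow> 0 < l \<Longrightarrow> l \<le> 1 \<Longrightarrow>
            gterm g (3 * l * x) \<le> D * l * gterm g x"
    using uniform_D[OF g \<rho> X0] by blast
  define q :: real where "q = 9/10"
  have q: "0 < q" "q \<le> 1" "q < 1" unfolding q_def by auto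
  have gxn: "gterm g (x n) \<ge> 0" for n using gterm_nonneg[OF g x] .
  have bound: "gterm g (y n) \<le> D * (\<Sum>j\<le>n. gterm g (x j) * q ^ (n - j))" for n
  proof -
    define A where "A = (\<lambda>j. q ^ (n - j) * x j) ` {..n}"
    have A: "finite A" "A \<noteq> {}" unfolding A_def by auto
    define M where "M = Max A"
    have "M \<in> A" unfolding M_def using Max_in[OF A] .
    then obtain k where k: "k \<le> n" "M = q ^ (n - k) * x k"
      unfolding A_def by auto
    have mx: "q ^ (n - j) * x j \<le> M" if "j \<le> n" for j
      unfolding M_def using Max_ge[OF A(1)] that unfolding A_def by auto
    have M0: "M \<ge> 0" using k q x[of k] by simp
    have "(\<Sum>j\<le>n. (1/2) ^ (n - j) * (x j)\<^sup>2) = (\<Sum>j\<le>n. (50/81) ^ (n - j) * (q ^ (n - j) * x j)\<^sup>2)"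
      by (rule sum.cong) (simp_all add: q_def power_mult_distrib power_mult[symmetric] power2_eq_square
          flip: power_mult_distrib)
    also have "\<dots> \<le> (\<Sum>j\<le>n. (50/81) ^ (n - j) * M\<^sup>2)"
    proof (rule sum_mono)
      fix j assume "j \<in> {..n}"
      then have "q ^ (n - j) * x j \<le> M" using mx by simp
      moreover have "0 \<le> q ^ (n - j) * x j" using q x by simp
      ultimately have "(q ^ (n - j) * x j)\<^sup>2 \<le> M\<^sup>2" by (rule power_mono)
      then show "(50/81) ^ (n - j) * (q ^ (n - j) * x j)\<^sup>2 \<le> (50/81) ^ (n - j) * M\<^sup>2"
        by (intro mult_left_mono) auto
    qed
    also have "\<dots> = (\<Sum>j\<le>n. (50/81::real) ^ (n - j)) * M\<^sup>2" by (simp add: sum_distrib_right)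
    also have "\<dots> \<le> (1 / (1 - 50/81)) * M\<^sup>2"
      by (intro mult_right_mono geo_rev_bound) auto
    finally have "(y n)\<^sup>2 \<le> 2 * ((81/31) * M\<^sup>2)" using yb[of n] by simp
    moreover have "(3 * M)\<^sup>2 = 9 * M\<^sup>2" by (simp add: power_mult_distrib)
    moreover have "M\<^sup>2 \<ge> 0" by simp
    ultimately have "(y n)\<^sup>2 \<le> (3 * M)\<^sup>2" by linarith
    then have yM: "y n \<le> 3 * M" by (rule power2_le_imp_le) (use M0 in simp)
    have "gterm g (y n) \<le> gterm g (3 * M)" by (rule gterm_mono[OF g y yM])
    also have "\<dots> = gterm g (3 * q ^ (n - k) * x k)" unfolding k by (simp add: ac_simps)
    also have "\<dots> \<le> D * q ^ (n - k) * gterm g (x k)"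
      by (rule D) (use x xX q in \<open>auto simp: power_le_one\<close>)
    also have "\<dots> = D * (gterm g (x k) * q ^ (n - k))" by simp
    also have "\<dots> \<le> D * (\<Sum>j\<le>n. gterm g (x j) * q ^ (n - j))"
    proof -
      have D0: "D \<ge> 0"
      proof -
        have "gterm g (3 * 1 * X) \<le> D * 1 * gterm g X" by (rule D) (use X0 in auto)
        moreover have "gterm g (3 * 1 * X) > 0" "gterm g X > 0" using gterm_pos[OF g] X0 by auto
        ultimately show ?thesis by (smt (verit) mult_nonpos_nonneg mult_cancel_right2)
      qed
      have "gterm g (x k) * q ^ (n - k) \<le> (\<Sum>j\<le>n. gterm g (x j) * q ^ (n - j))"
        by (rule member_le_sum) (use k gxn q in auto)
      then show ?thesis using D0 by (intro mult_left_mono) auto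
    qed
    finally show ?thesis .
  qed
  have "summable (\<lambda>n. \<Sum>j\<le>n. gterm g (x j) * q ^ (n - j))"
    by (rule summable_Cauchy_product) (use s gxn q in \<open>auto intro: summable_geometric\<close>)
  then have "summable (\<lambda>n. D * (\<Sum>j\<le>n. gterm g (x j) * q ^ (n - j)))" by (rule summable_mult)
  then show ?thesis
    by (rule summable_comparison_test[rotated]) (use bound gterm_nonneg[OF g y] in auto)
qed

lemma eint_sets[measurable]: "eint x y \<in> sets borel"
  unfolding eint_def by measurable

lemma eint_sets_lborel[measurable]: "eint x y \<in> sets lborel"
  by simp

lemma Jp_sets[measurable]: "{t::real. x < ereal t \<and> ereal t \<le> y} \<in> sets lborel"
  by measurable

lemma nn_set_mono:
  fixes h :: "real \<Rightarrow> ennreal"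
  assumes "A \<subseteq> B"
  shows "(\<integral>\<^sup>+t\<in>A. h t \<partial>lborel) \<le> (\<integral>\<^sup>+t\<in>B. h t \<partial>lborel)"
  by (rule nn_integral_mono) (use assms in \<open>auto simp: indicator_def\<close>)

lemma nn_split_pt:
  fixes h :: "real \<Rightarrow> ennreal"
  assumes h[measurable]: "h \<in> borel_measurable lborel" and xr: "x < ereal r" and rz: "ereal r < z"
  shows "(\<integral>\<^sup>+t\<in>eint x z. h t \<partial>lborel) \<le>
    (\<integral>\<^sup>+t\<in>eint x (ereal r). h t \<partial>lborel) + (\<integral>\<^sup>+t\<in>eint (ereal r) z. h t \<partial>lborel)"
proof -
  have "AE t in lborel. h t * indicator (eint x z) t \<le>
          h t * indicator (eint x (ereal r)) t + h t * indicator (eint (ereal r) z) t"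
    using AE_lborel_singleton[of r]
  proof (rule AE_mp, intro AE_I2 impI)
    fix t :: real assume "t \<noteq> r"
    then show "h t * indicator (eint x z) t \<le>
          h t * indicator (eint x (ereal r)) t + h t * indicator (eint (ereal r) z) t"
      using xr rz by (cases "t < r") (auto simp: eint_def indicator_def)
  qed
  then have "(\<integral>\<^sup>+t\<in>eint x z. h t \<partial>lborel) \<le>
      (\<integral>\<^sup>+t. h t * indicator (eint x (ereal r)) t + h t * indicator (eint (ereal r) z) t \<partial>lborel)"
    by (rule nn_integral_mono_AE)
  also have "\<dots> = (\<integral>\<^sup>+t\<in>eint x (ereal r). h t \<partial>lborel) + (\<integral>\<^sup>+t\<in>eint (ereal r) z. h t \<partial>lborel)"
    by (rule nn_integral_add) auto
  finally show ?thesis .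
qed

lemma nn_split_Jp:
  fixes h :: "real \<Rightarrow> ennreal"
  assumes h[measurable]: "h \<in> borel_measurable lborel"
  shows "(\<integral>\<^sup>+t\<in>eint x z. h t \<partial>lborel) \<le>
    (\<integral>\<^sup>+t\<in>{t. x < ereal t \<and> ereal t \<le> y}. h t \<partial>lborel) + (\<integral>\<^sup>+t\<in>eint y z. h t \<partial>lborel)"
proof -
  have "(\<integral>\<^sup>+t\<in>eint x z. h t \<partial>lborel) \<le>
      (\<integral>\<^sup>+t. h t * indicator {t. x < ereal t \<and> ereal t \<le> y} t + h t * indicator (eint y z) t \<partial>lborel)"
    by (rule nn_integral_mono) (auto simp: eint_def indicator_def)
  also have "\<dots> = (\<integral>\<^sup>+t\<in>{t. x < ereal t \<and> ereal t \<le> y}. h t \<partial>lborel) + (\<integral>\<^sup>+t\<in>eint y z. h t \<partial>lborel)"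
    by (rule nn_integral_add) auto
  finally show ?thesis .
qed

theorem lemma4p6:
  fixes a b :: ereal and \<kappa> \<phi> :: "real \<Rightarrow> complex"
    and c :: "nat \<Rightarrow> ereal" and g :: "real \<Rightarrow> real" and \<rho> :: real
  assumes ab: "a < b"
    and meas_\<kappa>: "set_borel_measurable lborel (eint a b) \<kappa>"
    and meas_\<phi>: "set_borel_measurable lborel (eint a b) \<phi>"
    and L2_\<kappa>: "(\<integral>\<^sup>+ t\<in>eint a b. ennreal ((cmod (\<kappa> t))\<^sup>2) \<partial>lborel) < \<infinity>"
    and L2loc_\<phi>: "\<And>c'. a < c' \<Longrightarrow> c' < b \<Longrightarrow>
                 (\<integral>\<^sup>+ t\<in>eint a c'. ennreal ((cmod (\<phi> t))\<^sup>2) \<partial>lborel) < \<infinity>"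
    and c0: "c 0 = a"
    and c_mono: "strict_mono c"
    and c_lt: "\<And>n. c n < b"
    and c_norm: "\<And>n. (L2nrm (eint (c n) b) \<kappa>)\<^sup>2 = (1/2) ^ n * (L2nrm (eint a b) \<kappa>)\<^sup>2"
    and g: "growth_function g \<rho>"
    and \<rho>: "\<rho> > 1"
  defines "\<omega> \<equiv> (\<lambda>n. L2nrm (eint (c (n - 1)) (c n)) \<kappa> * L2nrm (eint (c (n - 1)) (c n)) \<phi>)"
  shows "summable (\<lambda>n. gterm g (\<omega> (Suc n))) \<longleftrightarrow>
         (\<integral>\<^sup>+ t\<in>eint a b.
            ennreal (gterm g (L2nrm (eint a (ereal t)) \<phi> * L2nrm (eint (ereal t) b) \<kappa>)
                     * (cmod (\<kappa> t))\<^sup>2 / (L2nrm (eint (ereal t) b) \<kappa>)\<^sup>2) \<partial>lborel) < \<infinity>"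
proof -
  define S where "S = eint a b"
  define \<kappa>' where "\<kappa>' = (\<lambda>t. indicator S t *\<^sub>R \<kappa> t)"
  define \<phi>' where "\<phi>' = (\<lambda>t. indicator S t *\<^sub>R \<phi> t)"
  have \<kappa>'m[measurable]: "\<kappa>' \<in> borel_measurable lborel"
    using meas_\<kappa> unfolding set_borel_measurable_def \<kappa>'_def S_def .
  have \<phi>'m[measurable]: "\<phi>' \<in> borel_measurable lborel"
    using meas_\<phi> unfolding set_borel_measurable_def \<phi>'_def S_def .
  define kS where "kS = (\<lambda>t. ennreal ((cmod (\<kappa>' t))\<^sup>2))"
  define pS where "pS = (\<lambda>t. ennreal ((cmod (\<phi>' t))\<^sup>2))"
  have kSm[measurable]: "kS \<in> borel_measurable lborel" unfolding kS_def by measurable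
  have pSm[measurable]: "pS \<in> borel_measurable lborel" unfolding pS_def by measurable
  define NK where "NK A = (\<integral>\<^sup>+ t\<in>A. ennreal ((cmod (\<kappa> t))\<^sup>2) \<partial>lborel)" for A
  define NP where "NP A = (\<integral>\<^sup>+ t\<in>A. ennreal ((cmod (\<phi> t))\<^sup>2) \<partial>lborel)" for A
  have NK_S: "NK A = (\<integral>\<^sup>+ t\<in>A. kS t \<partial>lborel)" if "A \<subseteq> S" for A
    unfolding NK_def kS_def \<kappa>'_def using that by (intro nn_integral_cong) (auto simp: indicator_def)
  have NP_S: "NP A = (\<integral>\<^sup>+ t\<in>A. pS t \<partial>lborel)" if "A \<subseteq> S" for A
    unfolding NP_def pS_def \<phi>'_def using that by (intro nn_integral_cong) (auto simp: indicator_def)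
  have NK_mono: "NK A \<le> NK B" if "A \<subseteq> B" for A B unfolding NK_def by (rule nn_set_mono[OF that])
  have NP_mono: "NP A \<le> NP B" if "A \<subseteq> B" for A B unfolding NP_def by (rule nn_set_mono[OF that])
  have NK_fin: "NK A < \<infinity>" if "A \<subseteq> S" for A
    using NK_mono[OF that] L2_\<kappa> unfolding NK_def S_def by (simp add: NK_def)
  have NP_fin: "NP A < \<infinity>" if "A \<subseteq> eint a c'" "a < c'" "c' < b" for A c'
    using NP_mono[OF that(1)] L2loc_\<phi>[OF that(2,3)] unfolding NP_def by simp
  define kv where "kv A = enn2real (NK A)" for A
  define pv where "pv A = enn2real (NP A)" for A
  have kv0: "kv A \<ge> 0" for A unfolding kv_def by simp
  have pv0: "pv A \<ge> 0" for A unfolding pv_def by simp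
  have L2k: "L2nrm A \<kappa> = sqrt (kv A)" for A unfolding L2nrm_def kv_def NK_def ..
  have L2p: "L2nrm A \<phi> = sqrt (pv A)" for A unfolding L2nrm_def pv_def NP_def ..
  have NK_eq: "NK A = ennreal (kv A)" if "A \<subseteq> S" for A
    using NK_fin[OF that] unfolding kv_def by (simp add: less_top)
  have NP_eq: "NP A = ennreal (pv A)" if "A \<subseteq> eint a c'" "a < c'" "c' < b" for A c'
    using NP_fin[OF that] unfolding pv_def by (simp add: less_top)
  have kv_mono: "kv A \<le> kv B" if "A \<subseteq> B" "B \<subseteq> S" for A B
    unfolding kv_def using NK_mono[OF that(1)] NK_fin[OF that(2)] by (simp add: enn2real_mono)
  have pv_mono: "pv A \<le> pv B" if "A \<subseteq> B" "B \<subseteq> eint a c'" "a < c'" "c' < b" for A B c'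
    unfolding pv_def using NP_mono[OF that(1)] NP_fin[OF that(2-4)] by (simp add: enn2real_mono)
  have c_less: "c m < c n" if "m < n" for m n using c_mono that by (rule strict_monoD)
  have c_ge: "a \<le> c n" for n using c0 c_mono by (metis le0 strict_mono_less_eq)
  have c_gt: "a < c n" if "n \<ge> 1" for n using c_less[of 0 n] that c0 by simp
  define cr where "cr n = real_of_ereal (c n)" for n
  have c_real: "c n = ereal (cr n)" if "n \<ge> 1" for n
  proof -
    have "c n \<noteq> \<infinity>" using c_lt[of n] by auto
    moreover have "c n \<noteq> -\<infinity>" using c_gt[OF that] by auto
    ultimately show ?thesis unfolding cr_def by (cases "c n") auto
  qed
  have eint_sub: "eint x y \<subseteq> eint x' y'" if "x' \<le> x" "y \<le> y'" for x y x' y'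
    using that unfolding eint_def by auto
  have subS: "eint x y \<subseteq> S" if "a \<le> x" "y \<le> b" for x y
    unfolding S_def using eint_sub that .
  define Kc where "Kc n = kv (eint (c n) b)" for n
  define K0 where "K0 = kv S"
  have Kc: "Kc n = (1/2) ^ n * K0" for n
    using c_norm[of n] unfolding L2k Kc_def K0_def S_def using kv0 by simp
  have K00: "K0 \<ge> 0" unfolding K0_def by (rule kv0)
  define Kt where "Kt t = kv (eint (ereal t) b)" for t
  define Ph where "Ph t = pv (eint a (ereal t))" for t
  define F where "F t = ennreal (gterm g (L2nrm (eint a (ereal t)) \<phi> * L2nrm (eint (ereal t) b) \<kappa>)
                     * (cmod (\<kappa> t))\<^sup>2 / (L2nrm (eint (ereal t) b) \<kappa>)\<^sup>2)" for t
  have F: "F t = ennreal (gterm g (sqrt (Ph t) * sqrt (Kt t)) * (cmod (\<kappa> t))\<^sup>2 / Kt t)" for t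
    unfolding F_def L2k L2p Ph_def Kt_def using kv0 by simp
  have \<omega>: "\<omega> (Suc i) = sqrt (kv (eint (c i) (c (Suc i)))) * sqrt (pv (eint (c i) (c (Suc i))))" for i
    unfolding \<omega>_def L2k L2p by simp
  have goal_eq: "?thesis \<longleftrightarrow> (summable (\<lambda>i. gterm g (\<omega> (Suc i))) \<longleftrightarrow> (\<integral>\<^sup>+ t\<in>S. F t \<partial>lborel) < \<infinity>)"
    unfolding F_def S_def ..
  show ?thesis
  proof (cases "K0 = 0")
    case True
    have Kc0: "Kc n = 0" for n using Kc True by simp
    have L: "summable (\<lambda>i. gterm g (\<omega> (Suc i)))"
    proof -
      have "kv (eint (c i) (c (Suc i))) = 0" for i
        using kv_mono[OF eint_sub[OF order.refl less_imp_le[OF c_lt[of "Suc i"]]] subS[OF c_ge[of i] order.refl]]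
          Kc0[of i] kv0[of "eint (c i) (c (Suc i))"] unfolding Kc_def by linarith
      then have "\<omega> (Suc i) = 0" for i unfolding \<omega> by simp
      then show ?thesis by (simp add: gterm_def)
    qed
    have R: "(\<integral>\<^sup>+ t\<in>S. F t \<partial>lborel) < \<infinity>"
    proof -
      have "F t * indicator S t = 0" for t
      proof (cases "t \<in> S")
        case True
        have "a \<le> ereal t" using True unfolding S_def eint_def by auto
        then have "Kt t \<le> K0" unfolding Kt_def K0_def using kv_mono[OF subS[OF _ order.refl] subset_refl] by blast
        then have "Kt t = 0" using kv0 True unfolding Kt_def K0_def \<open>K0 = 0\<close>
          by (metis K0_def \<open>K0 = 0\<close> order_antisym)
        then show ?thesis unfolding F by simp
      qed simp
      then show ?thesis by (simp only:) simp
    qed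
    show ?thesis unfolding goal_eq using L R by simp
  next
    case False
    then have K0p: "K0 > 0" using K00 by simp
    have Kcp: "Kc n > 0" for n unfolding Kc using K0p by simp
    have Kc_Suc: "Kc n = 2 * Kc (Suc n)" for n unfolding Kc by simp
    define J where "J m = {t. c m < ereal t \<and> ereal t \<le> c (Suc m)}" for m
    have J_sets[measurable]: "J m \<in> sets lborel" "J m \<in> sets borel" for m
      unfolding J_def using Jp_sets by auto
    have J_S: "J m \<subseteq> S" for m
      unfolding J_def S_def eint_def using c_ge[of m] c_lt[of "Suc m"] by auto
    have J_disj: "m = m'" if "t \<in> J m" "t \<in> J m'" for t m m'
    proof (rule ccontr)
      assume "m \<noteq> m'"
      then consider "Suc m \<le> m'" | "Suc m' \<le> m" by linarith
      then show False
      proof cases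
        case 1
        then have "c (Suc m) \<le> c m'" using c_mono by (simp add: strict_mono_less_eq)
        then show False using that unfolding J_def by auto
      next
        case 2
        then have "c (Suc m') \<le> c m" using c_mono by (simp add: strict_mono_less_eq)
        then show False using that unfolding J_def by auto
      qed
    qed
    have J_eint: "J m \<subseteq> eint (c m) b" for m
      unfolding J_def eint_def using c_lt[of "Suc m"] by auto
    have tS: "a < ereal t" "ereal t < b" if "t \<in> S" for t using that unfolding S_def eint_def by auto
    define Qj where "Qj i = kv (eint (c i) (c (Suc i)))" for i
    define Pj where "Pj i = pv (eint (c i) (c (Suc i)))" for i
    have \<omega>': "\<omega> (Suc i) = sqrt (Qj i) * sqrt (Pj i)" for i unfolding \<omega> Qj_def Pj_def ..
    have \<omega>0: "\<omega> (Suc i) \<ge> 0" for i unfolding \<omega>' Qj_def Pj_def using kv0 pv0 by simp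
    have \<omega>sq: "(\<omega> (Suc i))\<^sup>2 = Qj i * Pj i" for i
      unfolding \<omega>' Qj_def Pj_def using kv0 pv0 by (simp add: power_mult_distrib)
    have Qj_le: "Qj i \<le> Kc i" for i
      unfolding Qj_def Kc_def
      by (rule kv_mono[OF eint_sub[OF order.refl less_imp_le[OF c_lt[of "Suc i"]]] subS[OF c_ge order.refl]])
    have NK_split: "NK (eint x z) \<le> NK (eint x (ereal r)) + NK (eint (ereal r) z)"
      if "x < ereal r" "ereal r < z" "a \<le> x" "z \<le> b" for x r z
    proof -
      have s1: "eint x z \<subseteq> S" by (rule subS) (use that in auto)
      have s2: "eint x (ereal r) \<subseteq> S" by (rule subS) (use that in auto)
      have s3: "eint (ereal r) z \<subseteq> S" by (rule subS) (use that in auto)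
      show ?thesis unfolding NK_S[OF s1] NK_S[OF s2] NK_S[OF s3] by (rule nn_split_pt[OF kSm that(1,2)])
    qed
    have NP_split: "NP (eint x z) \<le> NP (eint x (ereal r)) + NP (eint (ereal r) z)"
      if "x < ereal r" "ereal r < z" "a \<le> x" "z \<le> b" for x r z
    proof -
      have s1: "eint x z \<subseteq> S" by (rule subS) (use that in auto)
      have s2: "eint x (ereal r) \<subseteq> S" by (rule subS) (use that in auto)
      have s3: "eint (ereal r) z \<subseteq> S" by (rule subS) (use that in auto)
      show ?thesis unfolding NP_S[OF s1] NP_S[OF s2] NP_S[OF s3] by (rule nn_split_pt[OF pSm that(1,2)])
    qed
    have Qj_ge: "Kc (Suc i) \<le> Qj i" for i
    proof -
      have cS: "c (Suc i) = ereal (cr (Suc i))" by (rule c_real) simp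
      have "NK (eint (c i) b) \<le> NK (eint (c i) (c (Suc i))) + NK (eint (c (Suc i)) b)"
        unfolding cS by (rule NK_split) (use c_less[of i "Suc i"] c_lt[of "Suc i"] c_ge[of i] cS in auto)
      then have "ennreal (Kc i) \<le> ennreal (Qj i) + ennreal (Kc (Suc i))"
        unfolding Kc_def Qj_def
          NK_eq[OF subS[OF c_ge[of i] order.refl]] NK_eq[OF subS[OF c_ge[of i] less_imp_le[OF c_lt[of "Suc i"]]]]
          NK_eq[OF subS[OF c_ge[of "Suc i"] order.refl]] .
      then have "Kc i \<le> Qj i + Kc (Suc i)"
        using kv0 unfolding Qj_def Kc_def by (simp add: ennreal_plus[symmetric] del: ennreal_plus)
      then show ?thesis using Kc_Suc[of i] by simp
    qed
    have A: "(\<integral>\<^sup>+ t\<in>S. F t \<partial>lborel) < \<infinity>" if sm: "summable (\<lambda>i. gterm g (\<omega> (Suc i)))"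
    proof -
      define Y where "Y m = sqrt (pv (eint a (c (Suc m)))) * sqrt (Kc m)" for m
      have Y0: "Y m \<ge> 0" for m unfolding Y_def Kc_def using kv0 pv0 by simp
      have Pcum: "pv (eint a (c (Suc m))) \<le> (\<Sum>j\<le>m. Pj j)" for m
      proof (induction m)
        case 0 then show ?case by (simp add: Pj_def c0)
      next
        case (Suc m)
        have cS: "c (Suc m) = ereal (cr (Suc m))" by (rule c_real) simp
        have sub1: "eint a (c (Suc (Suc m))) \<subseteq> eint a (c (Suc (Suc m)))" by simp
        have lt1: "a < c (Suc (Suc m))" "c (Suc (Suc m)) < b" using c_gt[of "Suc (Suc m)"] c_lt by auto
        have "NP (eint a (c (Suc (Suc m)))) \<le> NP (eint a (c (Suc m))) + NP (eint (c (Suc m)) (c (Suc (Suc m))))"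
          unfolding cS by (rule NP_split) (use c_gt[of "Suc m"] c_less[of "Suc m" "Suc (Suc m)"] c_lt[of "Suc (Suc m)"] cS in auto)
        moreover have "NP (eint a (c (Suc (Suc m)))) = ennreal (pv (eint a (c (Suc (Suc m)))))"
          by (rule NP_eq[OF sub1 lt1])
        moreover have "NP (eint a (c (Suc m))) = ennreal (pv (eint a (c (Suc m))))"
          by (rule NP_eq[OF _ lt1]) (rule eint_sub; use c_less[of "Suc m" "Suc (Suc m)"] in auto)
        moreover have "NP (eint (c (Suc m)) (c (Suc (Suc m)))) = ennreal (Pj (Suc m))"
          unfolding Pj_def by (rule NP_eq[OF _ lt1]) (rule eint_sub; use c_ge[of "Suc m"] in auto)
        ultimately have "pv (eint a (c (Suc (Suc m)))) \<le> pv (eint a (c (Suc m))) + Pj (Suc m)"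
          using pv0 unfolding Pj_def by (simp add: ennreal_plus[symmetric] del: ennreal_plus)
        then show ?case using Suc.IH by simp
      qed
      have Yb: "(Y m)\<^sup>2 \<le> 2 * (\<Sum>j\<le>m. (1/2) ^ (m - j) * (\<omega> (Suc j))\<^sup>2)" for m
      proof -
        have "(Y m)\<^sup>2 = pv (eint a (c (Suc m))) * Kc m"
          unfolding Y_def Kc_def using kv0 pv0 by (simp add: power_mult_distrib)
        also have "\<dots> \<le> (\<Sum>j\<le>m. Pj j) * Kc m"
          using Pcum[of m] Kcp[of m] by (intro mult_right_mono) auto
        also have "\<dots> = (\<Sum>j\<le>m. Pj j * Kc m)" by (simp add: sum_distrib_right)
        also have "\<dots> \<le> (\<Sum>j\<le>m. 2 * ((1/2) ^ (m - j) * (\<omega> (Suc j))\<^sup>2))"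
        proof (rule sum_mono)
          fix j assume "j \<in> {..m}"
          then have jm: "j \<le> m" by simp
          have "(1/2::real) ^ m = 2 * ((1/2) ^ (m - j) * (1/2) ^ (Suc j))"
          proof -
            have "(1/2::real) ^ (m - j) * (1/2) ^ (Suc j) = (1/2) ^ (Suc m)"
              using jm by (simp add: power_add[symmetric])
            then show ?thesis by simp
          qed
          then have "Kc m = 2 * (1/2) ^ (m - j) * Kc (Suc j)" unfolding Kc by simp
          then have "Pj j * Kc m = 2 * (1/2) ^ (m - j) * (Kc (Suc j) * Pj j)" by simp
          also have "\<dots> \<le> 2 * (1/2) ^ (m - j) * (Qj j * Pj j)"
            using Qj_ge[of j] pv0 unfolding Pj_def by (intro mult_left_mono mult_right_mono) auto
          finally show "Pj j * Kc m \<le> 2 * ((1/2) ^ (m - j) * (\<omega> (Suc j))\<^sup>2)"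
            unfolding \<omega>sq by simp
        qed
        also have "\<dots> = 2 * (\<Sum>j\<le>m. (1/2) ^ (m - j) * (\<omega> (Suc j))\<^sup>2)" by (simp add: sum_distrib_left)
        finally show ?thesis .
      qed
      have smY: "summable (\<lambda>m. gterm g (Y m))"
        by (rule conv_summable[OF g \<rho> \<omega>0 Y0 Yb sm])
      define h where "h m t = ennreal (gterm g (Y m) / Kc (Suc m)) * kS t * indicator (J m) t" for m t
      have hm[measurable]: "h m \<in> borel_measurable lborel" for m unfolding h_def by measurable
      have F_le: "F t \<le> h m t" if t: "t \<in> J m" for m t
      proof -
        have tS': "t \<in> S" using J_S t by auto
        have ct: "c m < ereal t" "ereal t \<le> c (Suc m)" using t unfolding J_def by auto
        have Kt_le: "Kt t \<le> Kc m" unfolding Kt_def Kc_def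
          by (rule kv_mono[OF eint_sub subS]) (use ct c_ge in auto)
        have Kt_ge: "Kc (Suc m) \<le> Kt t" unfolding Kt_def Kc_def
          by (rule kv_mono[OF eint_sub subS]) (use ct tS[OF tS'] in auto)
        have Ktp: "Kt t > 0" using Kt_ge Kcp[of "Suc m"] by simp
        have lt1: "a < c (Suc m)" "c (Suc m) < b" using c_gt[of "Suc m"] c_lt by auto
        have "eint a (ereal t) \<subseteq> eint a (c (Suc m))" by (rule eint_sub) (use ct in auto)
        then have Ph_le: "Ph t \<le> pv (eint a (c (Suc m)))" unfolding Ph_def
          by (rule pv_mono[OF _ subset_refl lt1])
        have arg: "sqrt (Ph t) * sqrt (Kt t) \<le> Y m" unfolding Y_def
          by (intro mult_mono real_sqrt_le_mono Ph_le Kt_le) (auto simp: pv0 Kt_def kv0)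
        then have gle: "gterm g (sqrt (Ph t) * sqrt (Kt t)) \<le> gterm g (Y m)"
          using kv0 pv0 by (intro gterm_mono[OF g]) (auto simp: Ph_def Kt_def)
        have "gterm g (sqrt (Ph t) * sqrt (Kt t)) * (cmod (\<kappa> t))\<^sup>2 / Kt t \<le>
              gterm g (Y m) * (cmod (\<kappa> t))\<^sup>2 / Kc (Suc m)"
        proof (rule frac_le)
          show "0 \<le> gterm g (Y m) * (cmod (\<kappa> t))\<^sup>2"
            using gterm_nonneg[OF g Y0[of m]] by simp
          show "gterm g (sqrt (Ph t) * sqrt (Kt t)) * (cmod (\<kappa> t))\<^sup>2 \<le> gterm g (Y m) * (cmod (\<kappa> t))\<^sup>2"
            by (rule mult_right_mono[OF gle zero_le_power2])
        qed (use Kcp Kt_ge in auto)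
        moreover have "h m t = ennreal (gterm g (Y m) * (cmod (\<kappa> t))\<^sup>2 / Kc (Suc m))"
          unfolding h_def kS_def \<kappa>'_def using t tS' gterm_nonneg[OF g Y0[of m]] Kcp[of "Suc m"]
          by (simp add: ennreal_mult''[symmetric] del: ennreal_mult'')
        ultimately show ?thesis unfolding F by (simp add: ennreal_leI)
      qed
      have F_zero: "F t = 0" if tS': "t \<in> S" and nJ: "\<And>m. t \<notin> J m" for t
      proof -
        have ct: "c m < ereal t" for m
        proof (induction m)
          case 0 then show ?case using tS[OF tS'] c0 by simp
        next
          case (Suc m) then show ?case using nJ[of m] unfolding J_def by auto
        qed
        have Kt_le: "Kt t \<le> (1/2) ^ m * K0" for m unfolding Kc[symmetric] Kt_def Kc_def
          by (rule kv_mono[OF eint_sub subS]) (use ct[of m] c_ge in auto)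
        have "Kt t = 0"
        proof (rule ccontr)
          assume "Kt t \<noteq> 0"
          then have "Kt t / K0 > 0" using kv0[of "eint (ereal t) b"] K0p unfolding Kt_def by simp
          then obtain m where "(1/2::real) ^ m < Kt t / K0" using real_arch_pow_inv[of "Kt t / K0" "1/2"] by auto
          then have "(1/2) ^ m * K0 < Kt t" using K0p by (simp add: field_simps)
          then show False using Kt_le[of m] by simp
        qed
        then show ?thesis unfolding F by simp
      qed
      have pt: "F t * indicator S t \<le> (\<Sum>m. h m t)" for t
      proof (cases "t \<in> S")
        case True
        show ?thesis
        proof (cases "\<exists>m. t \<in> J m")
          case True
          then obtain m where m: "t \<in> J m" by blast
          have "F t * indicator S t \<le> F t" by (simp add: indicator_def)
          also have "\<dots> \<le> h m t" by (rule F_le[OF m])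
          also have "\<dots> \<le> (\<Sum>m. h m t)"
            using sum_le_suminf[of "\<lambda>m. h m t" "{m}"] by (simp add: summableI)
          finally show ?thesis .
        next
          case False
          then show ?thesis using F_zero[OF \<open>t \<in> S\<close>] by auto
        qed
      qed simp
      have int_h: "(\<integral>\<^sup>+t. h m t \<partial>lborel) \<le> ennreal (2 * gterm g (Y m))" for m
      proof -
        have JS: "J m \<subseteq> S" by (rule J_S)
        have sub2: "eint (c m) b \<subseteq> S" by (rule subS[OF c_ge order.refl])
        have "(\<integral>\<^sup>+t. h m t \<partial>lborel) = ennreal (gterm g (Y m) / Kc (Suc m)) * (\<integral>\<^sup>+t\<in>J m. kS t \<partial>lborel)"
          unfolding h_def by (simp add: mult.assoc nn_integral_cmult)
        also have "(\<integral>\<^sup>+t\<in>J m. kS t \<partial>lborel) \<le> (\<integral>\<^sup>+t\<in>eint (c m) b. kS t \<partial>lborel)"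
          by (rule nn_set_mono[OF J_eint])
        also have "\<dots> = ennreal (Kc m)" unfolding Kc_def using NK_S[OF sub2] NK_eq[OF sub2] by simp
        finally have "(\<integral>\<^sup>+t. h m t \<partial>lborel) \<le> ennreal (gterm g (Y m) / Kc (Suc m)) * ennreal (Kc m)"
          by (simp add: mult_left_mono)
        also have "\<dots> = ennreal (gterm g (Y m) / Kc (Suc m) * Kc m)"
          using Kcp[of m] by (simp add: ennreal_mult''[symmetric] del: ennreal_mult'')
        also have "gterm g (Y m) / Kc (Suc m) * Kc m = 2 * gterm g (Y m)"
          using Kc_Suc[of m] Kcp[of "Suc m"] by simp
        finally show ?thesis .
      qed
      have "(\<integral>\<^sup>+ t\<in>S. F t \<partial>lborel) \<le> (\<integral>\<^sup>+t. (\<Sum>m. h m t) \<partial>lborel)"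
        by (intro nn_integral_mono pt)
      also have "\<dots> = (\<Sum>m. (\<integral>\<^sup>+t. h m t \<partial>lborel))" by (rule nn_integral_suminf) simp
      also have "\<dots> \<le> (\<Sum>m. ennreal (2 * gterm g (Y m)))" by (intro suminf_le int_h) auto
      also have "\<dots> = ennreal (\<Sum>m. 2 * gterm g (Y m))"
        by (rule suminf_ennreal2) (use gterm_nonneg[OF g Y0] summable_mult[OF smY, of 2] in auto)
      also have "\<dots> < \<infinity>" by simp
      finally show ?thesis .
    qed
    have B: "summable (\<lambda>i. gterm g (\<omega> (Suc i)))" if fin: "(\<integral>\<^sup>+ t\<in>S. F t \<partial>lborel) < \<infinity>"
    proof -
      define l where "l i t = ennreal (gterm g (\<omega> (Suc i) / 2) / Kc (Suc i)) * kS t * indicator (J (Suc i)) t" for i t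
      have lm[measurable]: "l i \<in> borel_measurable lborel" for i unfolding l_def by measurable
      have l_le: "l i t \<le> F t" if t: "t \<in> J (Suc i)" for i t
      proof -
        have tS': "t \<in> S" using J_S t by auto
        have ct: "c (Suc i) < ereal t" "ereal t \<le> c (Suc (Suc i))" using t unfolding J_def by auto
        have Kt_le: "Kt t \<le> Kc (Suc i)" unfolding Kt_def Kc_def
          by (rule kv_mono[OF eint_sub subS]) (use ct c_ge in auto)
        have Kt_ge: "Kc (Suc (Suc i)) \<le> Kt t" unfolding Kt_def Kc_def
          by (rule kv_mono[OF eint_sub subS]) (use ct tS[OF tS'] in auto)
        have Ktp: "Kt t > 0" using Kt_ge Kcp[of "Suc (Suc i)"] by simp
        have "eint (c i) (c (Suc i)) \<subseteq> eint a (ereal t)"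
          by (rule eint_sub) (use ct c_ge[of i] in auto)
        then have Ph_ge: "Pj i \<le> Ph t" unfolding Pj_def Ph_def
          by (rule pv_mono[OF _ subset_refl tS[OF tS']])
        have "(\<omega> (Suc i) / 2)\<^sup>2 = Qj i * Pj i / 4" unfolding power_divide \<omega>sq by simp
        also have "\<dots> \<le> (2 * Kc (Suc i)) * Ph t / 4"
          using Qj_le[of i] Kc_Suc[of i] Ph_ge pv0 kv0 Kcp[of "Suc i"] unfolding Qj_def Pj_def
          by (intro divide_right_mono mult_mono) auto
        also have "\<dots> = Kc (Suc (Suc i)) * Ph t" using Kc_Suc[of "Suc i"] by simp
        also have "\<dots> \<le> Kt t * Ph t" using Kt_ge pv0 unfolding Ph_def by (intro mult_right_mono) auto
        also have "\<dots> = (sqrt (Ph t) * sqrt (Kt t))\<^sup>2"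
          using kv0 pv0 unfolding Ph_def Kt_def by (simp add: power_mult_distrib)
        finally have "\<omega> (Suc i) / 2 \<le> sqrt (Ph t) * sqrt (Kt t)"
          by (rule power2_le_imp_le) (use kv0 pv0 in \<open>simp add: Ph_def Kt_def\<close>)
        then have gle: "gterm g (\<omega> (Suc i) / 2) \<le> gterm g (sqrt (Ph t) * sqrt (Kt t))"
          using \<omega>0[of i] by (intro gterm_mono[OF g]) auto
        have "gterm g (\<omega> (Suc i) / 2) * (cmod (\<kappa> t))\<^sup>2 / Kc (Suc i) \<le>
              gterm g (sqrt (Ph t) * sqrt (Kt t)) * (cmod (\<kappa> t))\<^sup>2 / Kt t"
        proof (rule frac_le)
          show "0 \<le> gterm g (sqrt (Ph t) * sqrt (Kt t)) * (cmod (\<kappa> t))\<^sup>2"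
            using gterm_nonneg[OF g, of "sqrt (Ph t) * sqrt (Kt t)"] kv0 pv0 unfolding Ph_def Kt_def by simp
          show "gterm g (\<omega> (Suc i) / 2) * (cmod (\<kappa> t))\<^sup>2 \<le> gterm g (sqrt (Ph t) * sqrt (Kt t)) * (cmod (\<kappa> t))\<^sup>2"
            by (rule mult_right_mono[OF gle zero_le_power2])
        qed (use Ktp Kt_le in auto)
        moreover have "l i t = ennreal (gterm g (\<omega> (Suc i) / 2) * (cmod (\<kappa> t))\<^sup>2 / Kc (Suc i))"
          unfolding l_def kS_def \<kappa>'_def using t tS' gterm_nonneg[OF g, of "\<omega> (Suc i) / 2"] \<omega>0[of i] Kcp[of "Suc i"]
          by (simp add: ennreal_mult''[symmetric] del: ennreal_mult'')
        ultimately show ?thesis unfolding F by (simp add: ennreal_leI)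
      qed
      have sum_le: "(\<Sum>i. l i t) \<le> F t * indicator S t" for t
      proof (cases "\<exists>i. t \<in> J (Suc i)")
        case True
        then obtain i where i: "t \<in> J (Suc i)" by blast
        have "(\<Sum>i. l i t) = (\<Sum>i'\<in>{i}. l i' t)"
        proof (rule suminf_finite)
          fix i' assume "i' \<notin> {i}"
          then have "t \<notin> J (Suc i')" using J_disj[OF i] by auto
          then show "l i' t = 0" unfolding l_def by simp
        qed simp
        also have "\<dots> = l i t" by simp
        also have "\<dots> \<le> F t" by (rule l_le[OF i])
        also have "\<dots> = F t * indicator S t" using J_S i by (auto simp: indicator_def)
        finally show ?thesis .
      next
        case False
        then have "l i t = 0" for i unfolding l_def by auto
        then show ?thesis by simp
      qed
      have int_l: "ennreal (gterm g (\<omega> (Suc i) / 2) / 2) \<le> (\<integral>\<^sup>+t. l i t \<partial>lborel)" for i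
      proof -
        have JS: "J (Suc i) \<subseteq> S" by (rule J_S)
        have "NK (eint (c (Suc i)) b) \<le> NK (J (Suc i)) + NK (eint (c (Suc (Suc i))) b)"
          using nn_split_Jp[OF kSm, of "c (Suc i)" b "c (Suc (Suc i))"]
            NK_S[OF subS[OF c_ge order.refl]] NK_S[OF JS] unfolding J_def by simp
        then have "ennreal (Kc (Suc i)) \<le> ennreal (kv (J (Suc i))) + ennreal (Kc (Suc (Suc i)))"
          unfolding Kc_def using NK_eq[OF subS[OF c_ge order.refl]] NK_eq[OF JS] by simp
        then have "Kc (Suc i) \<le> kv (J (Suc i)) + Kc (Suc (Suc i))"
          using kv0 unfolding Kc_def by (simp add: ennreal_plus[symmetric] del: ennreal_plus)
        then have kvJ: "Kc (Suc i) / 2 \<le> kv (J (Suc i))" using Kc_Suc[of "Suc i"] by simp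
        have "(\<integral>\<^sup>+t. l i t \<partial>lborel) = ennreal (gterm g (\<omega> (Suc i) / 2) / Kc (Suc i)) * (\<integral>\<^sup>+t\<in>J (Suc i). kS t \<partial>lborel)"
          unfolding l_def by (simp add: mult.assoc nn_integral_cmult)
        also have "(\<integral>\<^sup>+t\<in>J (Suc i). kS t \<partial>lborel) = ennreal (kv (J (Suc i)))"
          using NK_S[OF JS] NK_eq[OF JS] by simp
        finally have eq: "(\<integral>\<^sup>+t. l i t \<partial>lborel) = ennreal (gterm g (\<omega> (Suc i) / 2) / Kc (Suc i) * kv (J (Suc i)))"
          using gterm_nonneg[OF g, of "\<omega> (Suc i) / 2"] \<omega>0[of i] Kcp[of "Suc i"]
          by (simp add: ennreal_mult''[symmetric] kv0 del: ennreal_mult'')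
        have "gterm g (\<omega> (Suc i) / 2) / 2 = gterm g (\<omega> (Suc i) / 2) / Kc (Suc i) * (Kc (Suc i) / 2)"
          using Kcp[of "Suc i"] by simp
        also have "\<dots> \<le> gterm g (\<omega> (Suc i) / 2) / Kc (Suc i) * kv (J (Suc i))"
          using kvJ gterm_nonneg[OF g, of "\<omega> (Suc i) / 2"] \<omega>0[of i] Kcp[of "Suc i"]
          by (intro mult_left_mono) auto
        finally show ?thesis unfolding eq by (rule ennreal_leI)
      qed
      have "(\<Sum>i. ennreal (gterm g (\<omega> (Suc i) / 2) / 2)) \<le> (\<Sum>i. (\<integral>\<^sup>+t. l i t \<partial>lborel))"
        by (intro suminf_le int_l) auto
      also have "\<dots> = (\<integral>\<^sup>+t. (\<Sum>i. l i t) \<partial>lborel)" by (rule nn_integral_suminf[symmetric]) simp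
      also have "\<dots> \<le> (\<integral>\<^sup>+ t\<in>S. F t \<partial>lborel)" by (intro nn_integral_mono sum_le)
      finally have "(\<Sum>i. ennreal (gterm g (\<omega> (Suc i) / 2) / 2)) \<noteq> top" using fin by (auto simp: top_unique)
      then have "summable (\<lambda>i. gterm g (\<omega> (Suc i) / 2) / 2)"
        by (rule summable_suminf_not_top[rotated]) (use gterm_nonneg[OF g] \<omega>0 in simp)
      then have "summable (\<lambda>i. 2 * (gterm g (\<omega> (Suc i) / 2) / 2))" by (rule summable_mult)
      then have "summable (\<lambda>i. gterm g (\<omega> (Suc i) / 2))" by simp
      then show ?thesis by (rule half_summable[OF g \<rho> \<omega>0])
    qed
    show ?thesis unfolding goal_eq using A B by blast
  qed
qed

end
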